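(* Let $n\ge1$ and consider the map $f:\mathbb{H}\to\mathbb{H}$, $f(t)=t^n$, viewed as a map $\mathbb{R}^4\to\mathbb{R}^4$: writing $(x+\mathbf{i}y+\mathbf{j}z+\mathbf{k}w)^n=f_1+\mathbf{i}f_2+\mathbf{j}f_3+\mathbf{k}f_4$ with $f_r\in\mathbb{R}[x,y,z,w]$, set $f=(f_1,f_2,f_3,f_4)$. Then $|J(f)|\ge 0$ at every point of $\mathbb{R}^4$.
   Context: $\mathbb{H}$ is the real quaternion algebra with basis $1,\mathbf{i},\mathbf{j},\mathbf{k}$ and the usual relations; it is identified with $\mathbb{R}^4$ via $x+\mathbf{i}y+\mathbf{j}z+\mathbf{k}w\mapsto(x,y,z,w)$. A map $f:\mathbb{H}\to\mathbb{H}$ with $f=f_1+\mathbf{i}f_2+\mathbf{j}f_3+\mathbf{k}f_4$ is regarded as $(f_1,f_2,f_3,f_4):\mathbb{R}^4\to\mathbb{R}^4$; $J(f)=[\partial f_i/\partial x_j]$ with $(x_1,x_2,x_3,x_4)=(x,y,z,w)$, and $|J(f)|$ is its determinant. *)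

theory Defs
  imports "HOL-Analysis.Analysis"
begin

datatype quat = Quat real real real real

fun qmul :: "quat \<Rightarrow> quat \<Rightarrow> quat" where
  "qmul (Quat a1 b1 c1 d1) (Quat a2 b2 c2 d2) =
     Quat (a1*a2 - b1*b2 - c1*c2 - d1*d2)
          (a1*b2 + b1*a2 + c1*d2 - d1*c2)
          (a1*c2 - b1*d2 + c1*a2 + d1*b2)
          (a1*d2 + b1*c2 - c1*b2 + d1*a2)"

fun qpow :: "quat \<Rightarrow> nat \<Rightarrow> quat" where
  "qpow q 0 = Quat 1 0 0 0"
| "qpow q (Suc n) = qmul (qpow q n) q"

definition vec_to_quat :: "real^4 \<Rightarrow> quat" where
  "vec_to_quat v = Quat (v$1) (v$2) (v$3) (v$4)"

fun quat_to_vec :: "quat \<Rightarrow> real^4" where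
  "quat_to_vec (Quat a b c d) = vector [a, b, c, d]"

definition qpow_map :: "nat \<Rightarrow> real^4 \<Rightarrow> real^4" where
  "qpow_map n v = quat_to_vec (qpow (vec_to_quat v) n)"

end

theory Submission
  imports Defs
begin

lemma det4: "det (A::'a::comm_ring_1^4^4) = A$1$1 * A$2$2 * A$3$3 * A$4$4 - A$1$1 * A$2$2 * A$3$4 * A$4$3 - A$1$1 * A$2$3 * A$3$2 * A$4$4 + A$1$1 * A$2$3 * A$3$4 * A$4$2 + A$1$1 * A$2$4 * A$3$2 * A$4$3 - A$1$1 * A$2$4 * A$3$3 * A$4$2 - A$1$2 * A$2$1 * A$3$3 * A$4$4 + A$1$2 * A$2$1 * A$3$4 * A$4$3 + A$1$2 * A$2$3 * A$3$1 * A$4$4 - A$1$2 * A$2$3 * A$3$4 * A$4$1 - A$1$2 * A$2$4 * A$3$1 * A$4$3 + A$1$2 * A$2$4 * A$3$3 * A$4$1 + A$1$3 * A$2$1 * A$3$2 * A$4$4 - A$1$3 * A$2$1 * A$3$4 * A$4$2 - A$1$3 * A$2$2 * A$3$1 * A$4$4 + A$1$3 * A$2$2 * A$3$4 * A$4$1 + A$1$3 * A$2$4 * A$3$1 * A$4$2 - A$1$3 * A$2$4 * A$3$2 * A$4$1 - A$1$4 * A$2$1 * A$3$2 * A$4$3 + A$1$4 * A$2$1 * A$3$3 * A$4$2 + A$1$4 * A$2$2 * A$3$1 * A$4$3 - A$1$4 * A$2$2 * A$3$3 * A$4$1 - A$1$4 * A$2$3 * A$3$1 * A$4$2 + A$1$4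 * A$2$3 * A$3$2 * A$4$1"
proof -
  have f1: "finite {2::4, 3, 4}" "1 \<notin> {2::4, 3,4}"
    by auto
  have f2: "finite {3::4, 4}" "2 \<notin> {3::4, 4}"
    by auto
  have f3: "finite {4::4}" "3 \<notin> {4::4}"
    by auto
  show ?thesis
    unfolding det_def UNIV_4
    unfolding sum_over_permutations_insert[OF f1]
    unfolding sum_over_permutations_insert[OF f2]
    unfolding sum_over_permutations_insert[OF f3]
    unfolding permutes_sing
    by (simp add: sign_swap_id permutation_swap_id sign_compose permutation_compose sign_id swap_id_eq algebra_simps)
qed

lemma vector_4 [simp]:
 "(vector [x,y,z,w] ::('a::zero)^4)$1 = x"
 "(vector [x,y,z,w] ::('a::zero)^4)$2 = y"
 "(vector [x,y,z,w] ::('a::zero)^4)$3 = z"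
 "(vector [x,y,z,w] ::('a::zero)^4)$4 = w"
  unfolding vector_def by simp_all

fun PA :: "nat \<Rightarrow> real \<Rightarrow> real \<Rightarrow> real" and PB :: "nat \<Rightarrow> real \<Rightarrow> real \<Rightarrow> real" where
  "PA 0 a s = 1"
| "PB 0 a s = 0"
| "PA (Suc n) a s = a * PA n a s - s * PB n a s"
| "PB (Suc n) a s = PA n a s + a * PB n a s"

fun DAa :: "nat \<Rightarrow> real \<Rightarrow> real \<Rightarrow> real" and DBa :: "nat \<Rightarrow> real \<Rightarrow> real \<Rightarrow> real" where
  "DAa 0 a s = 0"
| "DBa 0 a s = 0"
| "DAa (Suc n) a s = PA n a s + a * DAa n a s - s * DBa n a s"
| "DBa (Suc n) a s = DAa n a s + PB n a s + a * DBa n a s"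

fun DAs :: "nat \<Rightarrow> real \<Rightarrow> real \<Rightarrow> real" and DBs :: "nat \<Rightarrow> real \<Rightarrow> real \<Rightarrow> real" where
  "DAs 0 a s = 0"
| "DBs 0 a s = 0"
| "DAs (Suc n) a s = a * DAs n a s - PB n a s - s * DBs n a s"
| "DBs (Suc n) a s = DAs n a s + a * DBs n a s"

lemma CR: "DAa n a s = PB n a s + 2 * s * DBs n a s \<and> DBa n a s = - 2 * DAs n a s"
  by (induction n) (auto simp: algebra_simps)

lemma qpow_rep: "qpow (Quat a b c d) n = Quat (PA n a (b^2+c^2+d^2)) (PB n a (b^2+c^2+d^2) * b)
   (PB n a (b^2+c^2+d^2) * c) (PB n a (b^2+c^2+d^2) * d)"
  by (induction n) (auto simp: algebra_simps power2_eq_square)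

definition SS :: "real^4 \<Rightarrow> real" where "SS v = v$2^2 + v$3^2 + v$4^2"
definition DS :: "real^4 \<Rightarrow> real^4 \<Rightarrow> real" where "DS v h = 2 * (v$2*h$2 + v$3*h$3 + v$4*h$4)"

lemma dnth: "((\<lambda>v::real^4. v$i) has_derivative (\<lambda>h. h$i)) (at v)"
  by (rule bounded_linear_imp_has_derivative[OF bounded_linear_vec_nth])

lemma SS_deriv: "(SS has_derivative DS v) (at v)"
  unfolding SS_def DS_def
  by (auto intro!: derivative_eq_intros dnth simp: fun_eq_iff algebra_simps)

lemma PAB_deriv:
  "((\<lambda>v. PA n (v$1) (SS v)) has_derivative (\<lambda>h. DAa n (v$1) (SS v) * h$1 + DAs n (v$1) (SS v) * DS v h)) (at v)
   \<and> ((\<lambda>v. PB n (v$1) (SS v)) has_derivative (\<lambda>h. DBa n (v$1) (SS v) * h$1 + DBs n (v$1) (SS v) * DS v h)) (at v)"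
proof (induction n)
  case 0
  then show ?case by (simp add: has_derivative_const)
next
  case (Suc n)
  have d1: "((\<lambda>v::real^4. v$1) has_derivative (\<lambda>h. h$1)) (at v)"
    by (rule dnth)
  note IH1 = conjunct1[OF Suc.IH] and IH2 = conjunct2[OF Suc.IH]
  show ?case
    apply (simp only: PA.simps PB.simps)
    apply (intro conjI)
    subgoal
      by (rule has_derivative_eq_rhs, (rule derivative_intros d1 IH1 IH2 SS_deriv)+) (auto simp: fun_eq_iff algebra_simps)
    subgoal
      by (rule has_derivative_eq_rhs, (rule derivative_intros d1 IH1 IH2 SS_deriv)+) (auto simp: fun_eq_iff algebra_simps)
    done
qed

lemma qpow_map_eq: "qpow_map n = (\<lambda>v. PA n (v$1) (SS v) *\<^sub>R axis 1 1 + (PB n (v$1) (SS v) * v$2) *\<^sub>R axis 2 1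
   + (PB n (v$1) (SS v) * v$3) *\<^sub>R axis 3 1 + (PB n (v$1) (SS v) * v$4) *\<^sub>R axis 4 1)"
  apply (rule ext)
  apply (simp add: qpow_map_def vec_to_quat_def qpow_rep SS_def vec_eq_iff forall_4 axis_def)
  done

lemma qpow_map_deriv: "(qpow_map n has_derivative (\<lambda>h.
   (DAa n (v$1) (SS v) * h$1 + DAs n (v$1) (SS v) * DS v h) *\<^sub>R axis 1 1
 + ((DBa n (v$1) (SS v) * h$1 + DBs n (v$1) (SS v) * DS v h) * v$2 + PB n (v$1) (SS v) * h$2) *\<^sub>R axis 2 1
 + ((DBa n (v$1) (SS v) * h$1 + DBs n (v$1) (SS v) * DS v h) * v$3 + PB n (v$1) (SS v) * h$3) *\<^sub>R axis 3 1
 + ((DBa n (v$1) (SS v) * h$1 + DBs n (v$1) (SS v) * DS v h) * v$4 + PB n (v$1) (SS v) * h$4) *\<^sub>R axis 4 1)) (at v)"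
  unfolding qpow_map_eq
  using PAB_deriv[of n v]
  by (auto intro!: derivative_eq_intros dnth simp: fun_eq_iff algebra_simps)

lemma det_formula:
  fixes J :: "real^4^4"
  assumes "J$1$1 = aa" "J$1$2 = 2*as*x" "J$1$3 = 2*as*y" "J$1$4 = 2*as*z"
    "J$2$1 = ba*x" "J$2$2 = bs*2*x*x + b" "J$2$3 = bs*2*y*x" "J$2$4 = bs*2*z*x"
    "J$3$1 = ba*y" "J$3$2 = bs*2*x*y" "J$3$3 = bs*2*y*y + b" "J$3$4 = bs*2*z*y"
    "J$4$1 = ba*z" "J$4$2 = bs*2*x*z" "J$4$3 = bs*2*y*z" "J$4$4 = bs*2*z*z + b"
  shows "det J = b^2 * (aa * (b + 2*(x^2+y^2+z^2)*bs) - 2*(x^2+y^2+z^2)*as*ba)"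
  unfolding det4 assms by algebra

theorem corollary3p2:
  fixes n :: nat and p :: "real^4"
  assumes "n \<ge> 1"
  shows "det (jacobian (qpow_map n) (at p)) \<ge> 0"
proof -
  define a where "a = p$1"
  define s where "s = SS p"
  have s: "s = p$2^2+p$3^2+p$4^2" unfolding s_def SS_def by simp
  note fd = frechet_derivative_at[OF qpow_map_deriv[of n p], symmetric]
  have "det (jacobian (qpow_map n) (at p)) = (PB n a s)^2 * (DAa n a s * (PB n a s + 2 * s * (DBs n a s)) - 2 * s * (DAs n a s) * (DBa n a s))"
    unfolding s
    apply (rule det_formula)
    unfolding jacobian_def fd
    by (simp_all add: matrix_def axis_def DS_def a_def s_def SS_def algebra_simps)
  also have "\<dots> = (PB n a s)^2 * ((DAa n a s)^2 + 4 * s * (DAs n a s)^2)"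
    using CR[of n a s] by (simp add: power2_eq_square algebra_simps)
  also have "\<dots> \<ge> 0"
    unfolding s by (intro mult_nonneg_nonneg add_nonneg_nonneg) auto
  finally show ?thesis .
qed

end
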